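(* Let $p$ be an odd prime and let $k,n$ be positive integers. If either $k\equiv n\equiv 0\pmod{p-1}$ or $k\equiv n\equiv 1\pmod{p-1}$, then \[ B^{(-k)}_{n}\equiv 2\pmod p. \]
   Context: For any integer $k$, let $\mathrm{Li}_k(t)=\sum_{n=1}^{\infty} t^n/n^k$. The poly-Bernoulli numbers $B^{(k)}_n$ ($n\ge 0$) are defined by $\frac{\mathrm{Li}_k(1-e^{-t})}{1-e^{-t}}=\sum_{n=0}^{\infty}B^{(k)}_n\frac{t^n}{n!}$. For negative upper index these are integers. *)

theory Defs
  imports "HOL-Computational_Algebra.Computational_Algebra" "HOL-Number_Theory.Number_Theory"
begin

text \<open>For k a natural number, Li_{-k}(x)/x = sum_{m>=1} m^k x^(m-1), as a formal power series.\<close>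
definition Li_neg_div_x :: "nat \<Rightarrow> rat fps" where
  "Li_neg_div_x k = Abs_fps (\<lambda>i. of_nat (i + 1) ^ k)"

text \<open>Poly-Bernoulli numbers with negative upper index -k: n! times the n-th coefficient of
  Li_{-k}(1 - e^{-t}) / (1 - e^{-t}).\<close>
definition polyBernoulli_neg :: "nat \<Rightarrow> nat \<Rightarrow> rat" where
  "polyBernoulli_neg k n =
     fact n * fps_nth (fps_compose (Li_neg_div_x k) (1 - fps_exp (-1))) n"

end

theory Submission
  imports Defs "HOL-Combinatorics.Stirling"
begin


definition E :: "nat \<Rightarrow> nat \<Rightarrow> int" where
  "E n m = (\<Sum>j\<le>m. (-1)^j * of_nat (m choose j) * of_nat j ^ n)"

lemma E_0: "E 0 m = (if m = 0 then 1 else 0)"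
  using choose_alternating_sum[of m, where 'a=int] by (auto simp: E_def)

lemma E_Suc_0: "E (Suc n) 0 = 0"
  by (simp add: E_def)

lemma E_rec: "E (Suc n) (Suc m) = int (Suc m) * (E n (Suc m) - E n m)"
proof -
  define F where "F = (\<Sum>i\<le>m. (-1)^i * of_nat (m choose i) * (of_nat i + 1 :: int) ^ n)"
  have c: "int (Suc m choose Suc i) * int (Suc i) = int (Suc m) * int (m choose i)" for i
    using Suc_times_binomial_eq[of m i] by (metis of_nat_mult)
  have "E (Suc n) (Suc m) = (\<Sum>i\<le>m. (-1)^(Suc i) * of_nat (Suc m choose Suc i) * of_nat (Suc i) ^ Suc n)"
    unfolding E_def by (subst sum.atMost_Suc_shift) simp
  also have "\<dots> = (\<Sum>i\<le>m. - int (Suc m) * ((-1)^i * of_nat (m choose i) * (of_nat i + 1 :: int) ^ n))"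
  proof (rule sum.cong)
    fix i assume "i \<in> {..m}"
    have "(-1)^(Suc i) * of_nat (Suc m choose Suc i) * of_nat (Suc i) ^ Suc n
        = - ((-1)^i * (int (Suc m choose Suc i) * int (Suc i)) * (of_nat i + 1 :: int) ^ n)"
      by (simp add: algebra_simps)
    also have "\<dots> = - int (Suc m) * ((-1)^i * of_nat (m choose i) * (of_nat i + 1 :: int) ^ n)"
      unfolding c by (simp add: algebra_simps)
    finally show "(-1)^(Suc i) * of_nat (Suc m choose Suc i) * of_nat (Suc i) ^ Suc n
        = - int (Suc m) * ((-1)^i * of_nat (m choose i) * (of_nat i + 1 :: int) ^ n)" .
  qed simp
  also have "\<dots> = - int (Suc m) * F" by (simp add: F_def sum_distrib_left)
  finally have 1: "E (Suc n) (Suc m) = - int (Suc m) * F" .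
  have "E n (Suc m) = 0 ^ n + (\<Sum>i\<le>m. (-1)^(Suc i) * of_nat (Suc m choose Suc i) * (of_nat (Suc i) :: int) ^ n)"
    unfolding E_def by (subst sum.atMost_Suc_shift) simp
  also have "\<dots> = 0 ^ n - F - (\<Sum>i\<le>m. (-1)^i * of_nat (m choose Suc i) * (of_nat (Suc i) :: int) ^ n)"
    by (simp add: F_def sum_subtractf sum_negf sum.distrib algebra_simps)
  also have "(\<Sum>i\<le>m. (-1)^i * of_nat (m choose Suc i) * (of_nat (Suc i) :: int) ^ n) = 0 ^ n - E n m"
  proof -
    have "E n m = E n m + (-1)^Suc m * of_nat (m choose Suc m) * (of_nat (Suc m) :: int) ^ n" by simp
    also have "\<dots> = (\<Sum>j\<le>Suc m. (-1)^j * of_nat (m choose j) * of_nat j ^ n)"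
      by (simp add: E_def)
    also have "\<dots> = 0 ^ n - (\<Sum>i\<le>m. (-1)^i * of_nat (m choose Suc i) * (of_nat (Suc i) :: int) ^ n)"
      by (subst sum.atMost_Suc_shift) (simp add: sum_negf[symmetric])
    finally show ?thesis by simp
  qed
  finally have 2: "E n (Suc m) = E n m - F" by simp
  show ?thesis unfolding 1 2 by (simp add: algebra_simps)
qed

lemma E_Stirling: "E n m = (-1)^m * fact m * int (Stirling n m)"
proof (induction n arbitrary: m)
  case 0
  then show ?case by (cases m) (simp_all add: E_0)
next
  case (Suc n)
  show ?case
  proof (cases m)
    case 0 then show ?thesis by (simp add: E_Suc_0)
  next
    case (Suc m')
    show ?thesis unfolding Suc E_rec Suc.IH
      by (simp add: algebra_simps)
  qed
qed



lemma pow_expand: "(1 - fps_exp (-1::rat))^m =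
   (\<Sum>j\<le>m. fps_const (of_nat (m choose j) * (-1)^j) * fps_exp (- of_nat j))"
proof -
  have "(1 - fps_exp (-1::rat))^m = (- fps_exp (-1) + 1)^m" by simp
  also have "\<dots> = (\<Sum>j\<le>m. of_nat (m choose j) * (- fps_exp (-1::rat))^j * 1^(m-j))"
    by (rule binomial_ring)
  also have "\<dots> = (\<Sum>j\<le>m. fps_const (of_nat (m choose j) * (-1)^j) * fps_exp (- of_nat j))"
  proof (rule sum.cong)
    fix j
    have "(- fps_exp (-1::rat))^j = fps_const ((-1)^j) * fps_exp (- of_nat j)"
      by (simp add: power_minus' fps_exp_power_mult fps_const_neg[symmetric] fps_const_power[symmetric])
    then show "of_nat (m choose j) * (- fps_exp (-1::rat))^j * 1^(m-j) = fps_const (of_nat (m choose j) * (-1)^j) * fps_exp (- of_nat j)"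
      by (simp add: fps_of_nat fps_const_mult[symmetric] mult.assoc)
  qed simp
  finally show ?thesis .
qed

lemma coeff_pow: "fact n * ((1 - fps_exp (-1::rat))^m $ n) = of_int ((-1)^n * E n m)"
proof -
  have "fact n * ((1 - fps_exp (-1::rat))^m $ n) =
     (\<Sum>j\<le>m. fact n * (of_nat (m choose j) * (-1)^j * ((- of_nat j)^n / fact n)))"
    by (simp add: pow_expand fps_sum_nth sum_distrib_left)
  also have "\<dots> = (\<Sum>j\<le>m. of_int ((-1)^n * ((-1)^j * of_nat (m choose j) * of_nat j ^ n)))"
    by (rule sum.cong) (simp_all add: power_minus')
  also have "\<dots> = of_int ((-1)^n * E n m)"
    by (simp add: E_def sum_distrib_left)
  finally show ?thesis .
qed

lemma PB_formula: "polyBernoulli_neg k n = of_int (\<Sum>m\<le>n. (-1)^n * (int m + 1)^k * E n m)"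
proof -
  have "polyBernoulli_neg k n = (\<Sum>i\<le>n. of_nat (i+1)^k * (fact n * ((1 - fps_exp (-1::rat))^i $ n)))"
    unfolding polyBernoulli_neg_def fps_compose_nth Li_neg_div_x_def
    by (simp add: sum_distrib_left atLeast0AtMost algebra_simps)
  also have "\<dots> = (\<Sum>i\<le>n. of_int ((-1)^n * (int i + 1)^k * E n i))"
    by (rule sum.cong) (simp_all add: coeff_pow add.commute)
  finally show ?thesis by simp
qed



lemma ferm_int: assumes "prime p" "\<not> p dvd j"
  shows "[int j ^ (p-1) = 1] (mod int p)"
  using fermat_theorem[OF assms] cong_int_iff[of "j^(p-1)" 1 p] by simp

lemma pow_cong1: assumes "prime p" "n > 0" "[n = 1] (mod (p - 1))"
  shows "[int j ^ n = int j] (mod int p)"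
proof -
  have "(p-1) dvd (n - 1)" using assms(2,3) cong_altdef_nat[of 1 n] by (simp add: cong_sym_eq)
  then obtain q where q: "n - 1 = (p-1) * q" by blast
  have n: "n = Suc ((p-1)*q)" using q assms(2) by simp
  have eq: "int j ^ n = int j * (int j ^ (p-1)) ^ q" by (simp add: n power_mult)
  show ?thesis
  proof (cases "p dvd j")
    case True
    then have "[int j = 0] (mod int p)" by (simp add: cong_0_iff)
    then have "[int j * (int j ^ (p-1)) ^ q = 0 * (int j ^ (p-1)) ^ q] (mod int p)"
      by (rule cong_scalar_right)
    then show ?thesis unfolding eq using \<open>[int j = 0] (mod int p)\<close>
      by (metis cong_sym cong_trans mult_zero_left)
  next
    case False
    have h: "[(int j ^ (p-1)) ^ q = 1 ^ q] (mod int p)" by (rule cong_pow, rule ferm_int[OF assms(1) False])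
    have "[int j * (int j ^ (p-1)) ^ q = int j * 1] (mod int p)"
      using cong_scalar_left[OF h, of "int j"] by simp
    then show ?thesis unfolding eq by simp
  qed
qed

lemma pow_cong0: assumes "prime p" "n > 0" "[n = 0] (mod (p - 1))" "\<not> p dvd j"
  shows "[int j ^ n = 1] (mod int p)"
proof -
  have "(p-1) dvd n" using assms(3) by (simp add: cong_0_iff)
  then obtain q where q: "n = (p-1) * q" by blast
  have "[(int j ^ (p-1)) ^ q = 1 ^ q] (mod int p)" by (rule cong_pow, rule ferm_int[OF assms(1,4)])
  then show ?thesis by (simp add: q power_mult)
qed

lemma pow_cong0': assumes "n > 0" "p dvd j"
  shows "[int j ^ n = 0] (mod int p)"
proof -
  have "int p dvd int j" using assms(2) by simp
  moreover have "int j dvd int j ^ n" using assms(1) by (simp add: dvd_power)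
  ultimately have "int p dvd int j ^ n" by (rule dvd_trans)
  then show ?thesis by (simp add: cong_0_iff)
qed

lemma S0: "Stirling 0 m = (if m = 0 then 1 else 0)"
  by (cases m) simp_all

lemma S1: "Stirling (Suc 0) m = (if m = 1 then 1 else 0)"
proof (cases m)
  case 0 then show ?thesis by simp
next
  case (Suc m') then show ?thesis by (simp add: S0)
qed

lemma E1: "E (Suc 0) m = (if m = 1 then -1 else 0)"
  by (simp add: E_Stirling S1)

definition Bint :: "nat \<Rightarrow> nat \<Rightarrow> int" where
  "Bint k n = (\<Sum>m\<le>n. (-1)^n * (int m + 1)^k * E n m)"

lemma sumE1: assumes "n > 0" shows "(\<Sum>m\<le>n. (int m + 1) * E 1 m) = -2"
proof -
  have "(\<Sum>m\<le>n. (int m + 1) * E 1 m) = (\<Sum>m\<le>n. if m = 1 then -2 else 0)"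
    by (rule sum.cong) (auto simp: E1)
  also have "\<dots> = -2" using assms by (simp add: sum.delta)
  finally show ?thesis .
qed
lemma oddpow: "odd (n::nat) \<Longrightarrow> (-1::int)^n * (-2) = 2"
  by simp
lemma case1: assumes "prime p" "odd p" "k > 0" "n > 0" "[k = 1] (mod (p - 1))" "[n = 1] (mod (p - 1))"
  shows "[Bint k n = 2] (mod int p)"
proof -
  have "[Bint k n = (\<Sum>m\<le>n. (-1)^n * (int m + 1) * E 1 m)] (mod int p)"
    unfolding Bint_def
  proof (rule cong_sum)
    fix m
    have a: "[(int m + 1)^k = int m + 1] (mod int p)"
      using pow_cong1[OF assms(1,3,5), of "m+1"] by (simp add: add.commute)
    have b: "[E n m = E 1 m] (mod int p)" unfolding E_def
      by (rule cong_sum, rule cong_scalar_left) (use pow_cong1[OF assms(1,4,6)] in simp)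
    show "[(-1)^n * (int m + 1)^k * E n m = (-1)^n * (int m + 1) * E 1 m] (mod int p)"
      by (rule cong_mult[OF cong_mult[OF cong_refl a] b])
  qed
  also have "(\<Sum>m\<le>n. (-1)^n * (int m + 1) * E 1 m) = (-1)^n * (\<Sum>m\<le>n. (int m + 1) * E 1 m)"
    by (simp only: sum_distrib_left mult.assoc)
  also have "\<dots> = (-1)^n * (-2)" using sumE1[OF assms(4)] by simp
  also have "\<dots> = 2"
  proof -
    have "even (p - 1)" using assms(2) by simp
    then have "[n = 1] (mod 2)" using assms(6) cong_dvd_modulus_nat by blast
    then have "odd n" by (simp add: cong_def odd_iff_mod_2_eq_one)
    then show ?thesis by (rule oddpow)
  qed
  finally show ?thesis .
qed



lemma E_cong_m1: assumes "prime p" "n > 0" "[n = 0] (mod (p - 1))" "0 < m" "m < p"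
  shows "[E n m = -1] (mod int p)"
proof -
  have "[E n m = (\<Sum>j\<le>m. (-1)^j * of_nat (m choose j) - (if j = 0 then 1 else 0))] (mod int p)"
    unfolding E_def
  proof (rule cong_sum)
    fix j assume j: "j \<in> {..m}"
    show "[(-1)^j * of_nat (m choose j) * int j ^ n = (-1)^j * of_nat (m choose j) - (if j = 0 then 1 else 0)] (mod int p)"
    proof (cases "j = 0")
      case True then show ?thesis using assms(2) by (simp add: power_0_left)
    next
      case False
      have "\<not> p dvd j" using False j assms(5) by (auto dest: dvd_imp_le)
      then have "[int j ^ n = 1] (mod int p)" by (rule pow_cong0[OF assms(1-3)])
      then show ?thesis using False cong_scalar_left by fastforce
    qed
  qed
  also have "(\<Sum>j\<le>m. (-1)^j * of_nat (m choose j) - (if j = 0 then 1 else 0)) = (-1::int)"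
    using choose_alternating_sum[OF assms(4), where 'a=int] by (simp add: sum_subtractf)
  finally show ?thesis .
qed

lemma case0: assumes "prime p" "odd p" "k > 0" "n > 0" "[k = 0] (mod (p - 1))" "[n = 0] (mod (p - 1))"
  shows "[Bint k n = 2] (mod int p)"
proof -
  define t where "t m = (-1)^n * (int m + 1)^k * E n m" for m
  have p2: "p \<ge> 2" using assms(1) prime_ge_2_nat by blast
  have "(p-1) dvd n" using assms(6) by (simp add: cong_0_iff)
  then have pn: "p - 1 \<le> n" using assms(4) by (rule dvd_imp_le)
  have "even (p - 1)" using assms(2) by simp
  then have "even n" using \<open>(p-1) dvd n\<close> by (rule dvd_trans)
  have "Bint k n = sum t {0..<Suc n}" unfolding Bint_def t_def
    by (simp add: atLeast0LessThan lessThan_Suc_atMost)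
  also have "\<dots> = sum t {0..<p} + sum t {p..<Suc n}"
    using pn by (subst sum.atLeastLessThan_concat) auto
  finally have B: "Bint k n = sum t {0..<p} + sum t {p..<Suc n}" .
  have 2: "[sum t {p..<Suc n} = sum (\<lambda>_. 0) {p..<Suc n}] (mod int p)"
  proof (rule cong_sum)
    fix m assume m: "m \<in> {p..<Suc n}"
    have "p dvd fact m" using m p2 by (auto intro: dvd_fact)
    then have "int p dvd fact m" by (metis int_dvd_int_iff of_nat_fact)
    then show "[t m = 0] (mod int p)" unfolding t_def E_Stirling by (simp add: cong_0_iff)
  qed
  define g :: "nat \<Rightarrow> int" where "g m = (if m = 0 then 1 else 0) + (if m = p - 1 then 1 else 0) - 1" for m
  have 1: "[sum t {0..<p} = sum g {0..<p}] (mod int p)"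
  proof (rule cong_sum)
    fix m assume m: "m \<in> {0..<p}"
    show "[t m = g m] (mod int p)"
    proof -
      consider "m = 0" | "m = p - 1" | "0 < m" "m < p - 1" using m by fastforce
      then show ?thesis
      proof cases
        case 1 then show ?thesis using assms(4) p2 by (simp add: t_def g_def E_def power_0_left)
      next
        case 2
        have "[int (m+1) ^ k = 0] (mod int p)" using 2 p2 by (intro pow_cong0'[OF assms(3)]) auto
        then have "[(int m + 1) ^ k = 0] (mod int p)" by (simp add: add.commute)
        then have "[t m = (-1)^n * 0 * E n m] (mod int p)" unfolding t_def
          by (intro cong_mult cong_refl)
        then show ?thesis using 2 p2 by (simp add: g_def)
      next
        case 3
        have "\<not> p dvd (m+1)" using 3 by (auto dest: dvd_imp_le)
        then have a: "[int (m+1) ^ k = 1] (mod int p)" by (rule pow_cong0[OF assms(1,3,5)])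
        have b: "[E n m = -1] (mod int p)" using 3 by (intro E_cong_m1[OF assms(1,4,6)]) auto
        have "[t m = (-1)^n * 1 * (-1)] (mod int p)" unfolding t_def
          using a b by (intro cong_mult cong_refl) (auto simp: add.commute)
        then show ?thesis using 3 \<open>even n\<close> by (simp add: g_def)
      qed
    qed
  qed
  have gs: "sum g {0..<p} = 2 - int p"
    using p2 by (simp add: g_def sum.distrib sum_subtractf)
  have "[Bint k n = sum g {0..<p} + 0] (mod int p)"
    unfolding B using cong_add[OF 1 2] by simp
  also have "sum g {0..<p} + 0 = 2 - int p" using gs by simp
  also have "[2 - int p = 2] (mod int p)" by (simp add: cong_def)
  finally show ?thesis .
qed


theorem theorem3p4:
  fixes p k n :: nat
  assumes "prime p" and "odd p" and "k > 0" and "n > 0"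
    and "([k = 0] (mod (p - 1)) \<and> [n = 0] (mod (p - 1))) \<or>
         ([k = 1] (mod (p - 1)) \<and> [n = 1] (mod (p - 1)))"
  shows "\<exists>b::int. of_int b = polyBernoulli_neg k n \<and> [b = 2] (mod int p)"
proof (intro exI conjI)
  show "of_int (Bint k n) = polyBernoulli_neg k n" by (simp only: PB_formula Bint_def)
  show "[Bint k n = 2] (mod int p)"
    using assms(5)
  proof
    assume h: "[k = 0] (mod (p - 1)) \<and> [n = 0] (mod (p - 1))"
    show ?thesis using case0[OF assms(1-4)] h by blast
  next
    assume h: "[k = 1] (mod (p - 1)) \<and> [n = 1] (mod (p - 1))"
    show ?thesis using case1[OF assms(1-4)] h by blast
  qed
qed
end
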